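(* Let $G$ be a finite group and $X$ a path-connected CW complex with a free cellular $G$-action such that $\mathrm{cat}(X)=\mathrm{TC}(X)$. Then $\mathrm{TC}^{G,\infty}(X)=\mathrm{cat}(X)$.
   Context: $\mathrm{cat}$, $\mathrm{TC}$ are reduced LS category and topological complexity. $PX$ is the path space; $\mathcal{P}_k(X)=\{(\gamma_1,\dots,\gamma_k)\in(PX)^k\mid G\gamma_i(1)=G\gamma_{i+1}(0),\ 1\le i\le k-1\}$, $\pi_k(\gamma_1,\dots,\gamma_k)=(\gamma_1(0),\gamma_k(1))\in X\times X$; $\mathrm{secat}$ is reduced sectional category (least $n$ such that the base is covered by $n+1$ open sets each admitting a homotopy section); $\mathrm{TC}^{G,k}(X)=\mathrm{secat}(\pi_k)$, $\mathrm{TC}^{G,\infty}(X)=\min_k\mathrm{TC}^{G,k}(X)$. *)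

theory Defs
  imports "HOL-Analysis.Analysis" "HOL-Algebra.Group_Action"
begin

definition disc_set :: "nat \<Rightarrow> (nat \<Rightarrow> real) set" where
  "disc_set n = {x. (\<forall>i\<ge>n. x i = 0) \<and> (\<Sum>i<n. (x i)^2) \<le> 1}"

definition open_disc_set :: "nat \<Rightarrow> (nat \<Rightarrow> real) set" where
  "open_disc_set n = {x. (\<forall>i\<ge>n. x i = 0) \<and> (\<Sum>i<n. (x i)^2) < 1}"

definition sphere_set :: "nat \<Rightarrow> (nat \<Rightarrow> real) set" where
  "sphere_set n = {x. (\<forall>i\<ge>n. x i = 0) \<and> (\<Sum>i<n. (x i)^2) = 1}"

definition disc_top :: "nat \<Rightarrow> (nat \<Rightarrow> real) topology" where
  "disc_top n = subtopology (powertop_real UNIV) (disc_set n)"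

definition cw_structure ::
  "'a topology \<Rightarrow> 'a set set \<Rightarrow> ('a set \<Rightarrow> nat) \<Rightarrow> ('a set \<Rightarrow> (nat \<Rightarrow> real) \<Rightarrow> 'a) \<Rightarrow> bool" where
  "cw_structure X E cdim chi \<longleftrightarrow>
     Hausdorff_space X \<and>
     pairwise disjnt E \<and> \<Union>E = topspace X \<and>
     (\<forall>e\<in>E. continuous_map (disc_top (cdim e)) X (chi e)) \<and>
     (\<forall>e\<in>E. chi e ` open_disc_set (cdim e) = e) \<and>
     (\<forall>e\<in>E. homeomorphic_map (subtopology (disc_top (cdim e)) (open_disc_set (cdim e)))
                               (subtopology X e) (chi e)) \<and>
     (\<forall>e\<in>E. \<exists>F. finite F \<and> F \<subseteq> E \<and> (\<forall>e'\<in>F. cdim e' < cdim e) \<and>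
                   chi e ` sphere_set (cdim e) \<subseteq> \<Union>F) \<and>
     (\<forall>A. A \<subseteq> topspace X \<longrightarrow>
        (closedin X A \<longleftrightarrow>
          (\<forall>e\<in>E. closedin (disc_top (cdim e)) {x \<in> disc_set (cdim e). chi e x \<in> A})))"

abbreviation unit_I :: "real topology" where
  "unit_I \<equiv> top_of_set {0..1}"

text \<open>Least n such that the space B is covered by n+1 open sets each satisfying P
  (infinity if there is no such n).\<close>
definition cover_number :: "'b topology \<Rightarrow> ('b set \<Rightarrow> bool) \<Rightarrow> enat" where
  "cover_number B P = Inf {enat n | n. \<exists>U :: nat \<Rightarrow> 'b set.
      (\<forall>i\<le>n. openin B (U i) \<and> P (U i)) \<and> (\<Union>i\<le>n. U i) = topspace B}"

definition LS_cat :: "'a topology \<Rightarrow> enat" where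
  "LS_cat X = cover_number X
     (\<lambda>U. \<exists>a\<in>topspace X. homotopic_with (\<lambda>_. True) (subtopology X U) X id (\<lambda>_. a))"

text \<open>A continuous map U \<rightarrow> PX is encoded by its continuous adjoint U \<times> [0,1] \<rightarrow> X
  (exponential law; [0,1] is locally compact Hausdorff).
  Reduced TC(X) = secat of the path fibration PX \<rightarrow> X \<times> X, with homotopy sections.\<close>
definition TC :: "'a topology \<Rightarrow> enat" where
  "TC X = cover_number (prod_topology X X)
     (\<lambda>U. \<exists>h :: ('a \<times> 'a) \<times> real \<Rightarrow> 'a.
        continuous_map (prod_topology (subtopology (prod_topology X X) U) unit_I) X h \<and>
        homotopic_with (\<lambda>_. True) (subtopology (prod_topology X X) U) (prod_topology X X)
           (\<lambda>u. (h (u, 0), h (u, 1))) id)"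

text \<open>TC^{G,k}(X) = secat(\<pi>_k : P_k(X) \<rightarrow> X \<times> X). A continuous map U \<rightarrow> P_k(X) is
  a k-tuple of adjoints h 1, ..., h k with G h_i(u,1) = G h_{i+1}(u,0).\<close>
definition TC_G_k :: "'a topology \<Rightarrow> ('g, 'm) monoid_scheme \<Rightarrow> ('g \<Rightarrow> 'a \<Rightarrow> 'a) \<Rightarrow> nat \<Rightarrow> enat" where
  "TC_G_k X G \<phi> k = cover_number (prod_topology X X)
     (\<lambda>U. \<exists>h :: nat \<Rightarrow> ('a \<times> 'a) \<times> real \<Rightarrow> 'a.
        (\<forall>i\<in>{1..k}. continuous_map (prod_topology (subtopology (prod_topology X X) U) unit_I) X (h i)) \<and>
        (\<forall>u\<in>U. \<forall>i\<in>{1..<k}. orbit G \<phi> (h i (u, 1)) = orbit G \<phi> (h (Suc i) (u, 0))) \<and>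
        homotopic_with (\<lambda>_. True) (subtopology (prod_topology X X) U) (prod_topology X X)
           (\<lambda>u. (h 1 (u, 0), h k (u, 1))) id)"

definition TC_G_inf :: "'a topology \<Rightarrow> ('g, 'm) monoid_scheme \<Rightarrow> ('g \<Rightarrow> 'a \<Rightarrow> 'a) \<Rightarrow> enat" where
  "TC_G_inf X G \<phi> = (INF k\<in>{1..}. TC_G_k X G \<phi> k)"

end

theory Submission
  imports Defs
begin

lemma cover_number_le:
  assumes "\<And>U. openin B U \<Longrightarrow> P U \<Longrightarrow> openin A (f U) \<and> Q (f U)"
    and "\<And>U (n::nat). (\<forall>i\<le>n. openin B (U i)) \<Longrightarrow> (\<Union>i\<le>n. U i) = topspace B \<Longrightarrow> (\<Union>i\<le>n. f (U i)) = topspace A"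
  shows "cover_number A Q \<le> cover_number B P"
  unfolding cover_number_def
proof (rule Inf_superset_mono, safe)
  fix n :: nat and U assume h: "\<forall>i\<le>n. openin B (U i) \<and> P (U i)" "(\<Union>i\<le>n. U i) = topspace B"
  show "\<exists>na. enat n = enat na \<and> (\<exists>U. (\<forall>i\<le>na. openin A (U i) \<and> Q (U i)) \<and> (\<Union>i\<le>na. U i) = topspace A)"
    apply (rule exI[of _ n], simp only: simp_thms)
  proof (rule exI[of _ "\<lambda>i. f (U i)"], intro conjI allI impI)
    fix i assume "i \<le> n"
    then have "openin B (U i)" "P (U i)" using h(1) by auto
    then show "openin A (f (U i))" "Q (f (U i))" using assms(1) by auto
  next
    show "(\<Union>i\<le>n. f (U i)) = topspace A" using assms(2)[of n U] h by auto
  qed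
qed

lemma TC_G_k_one: "TC_G_k X G \<phi> 1 = TC X"
proof -
  have "(\<lambda>U. \<exists>h :: nat \<Rightarrow> ('a \<times> 'a) \<times> real \<Rightarrow> 'a.
        (\<forall>i\<in>{1..1}. continuous_map (prod_topology (subtopology (prod_topology X X) U) unit_I) X (h i)) \<and>
        (\<forall>u\<in>U. \<forall>i\<in>{1..<1::nat}. orbit G \<phi> (h i (u, 1)) = orbit G \<phi> (h (Suc i) (u, 0))) \<and>
        homotopic_with (\<lambda>_. True) (subtopology (prod_topology X X) U) (prod_topology X X)
           (\<lambda>u. (h 1 (u, 0), h 1 (u, 1))) id)
     = (\<lambda>U. \<exists>h :: ('a \<times> 'a) \<times> real \<Rightarrow> 'a.
        continuous_map (prod_topology (subtopology (prod_topology X X) U) unit_I) X h \<and>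
        homotopic_with (\<lambda>_. True) (subtopology (prod_topology X X) U) (prod_topology X X)
           (\<lambda>u. (h (u, 0), h (u, 1))) id)"
  proof (rule ext, rule iffI)
    fix U assume "\<exists>h :: nat \<Rightarrow> ('a \<times> 'a) \<times> real \<Rightarrow> 'a.
        (\<forall>i\<in>{1..1}. continuous_map (prod_topology (subtopology (prod_topology X X) U) unit_I) X (h i)) \<and>
        (\<forall>u\<in>U. \<forall>i\<in>{1..<1::nat}. orbit G \<phi> (h i (u, 1)) = orbit G \<phi> (h (Suc i) (u, 0))) \<and>
        homotopic_with (\<lambda>_. True) (subtopology (prod_topology X X) U) (prod_topology X X)
           (\<lambda>u. (h 1 (u, 0), h 1 (u, 1))) id"
    then obtain h where "continuous_map (prod_topology (subtopology (prod_topology X X) U) unit_I) X (h 1)"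
       "homotopic_with (\<lambda>_. True) (subtopology (prod_topology X X) U) (prod_topology X X)
           (\<lambda>u. (h 1 (u, 0), h 1 (u, 1))) id" by auto
    then show "\<exists>h :: ('a \<times> 'a) \<times> real \<Rightarrow> 'a.
        continuous_map (prod_topology (subtopology (prod_topology X X) U) unit_I) X h \<and>
        homotopic_with (\<lambda>_. True) (subtopology (prod_topology X X) U) (prod_topology X X)
           (\<lambda>u. (h (u, 0), h (u, 1))) id" by blast
  next
    fix U assume "\<exists>h :: ('a \<times> 'a) \<times> real \<Rightarrow> 'a.
        continuous_map (prod_topology (subtopology (prod_topology X X) U) unit_I) X h \<and>
        homotopic_with (\<lambda>_. True) (subtopology (prod_topology X X) U) (prod_topology X X)
           (\<lambda>u. (h (u, 0), h (u, 1))) id"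
    then obtain h where "continuous_map (prod_topology (subtopology (prod_topology X X) U) unit_I) X h"
       "homotopic_with (\<lambda>_. True) (subtopology (prod_topology X X) U) (prod_topology X X)
           (\<lambda>u. (h (u, 0), h (u, 1))) id" by auto
    then show "\<exists>h :: nat \<Rightarrow> ('a \<times> 'a) \<times> real \<Rightarrow> 'a.
        (\<forall>i\<in>{1..1}. continuous_map (prod_topology (subtopology (prod_topology X X) U) unit_I) X (h i)) \<and>
        (\<forall>u\<in>U. \<forall>i\<in>{1..<1::nat}. orbit G \<phi> (h i (u, 1)) = orbit G \<phi> (h (Suc i) (u, 0))) \<and>
        homotopic_with (\<lambda>_. True) (subtopology (prod_topology X X) U) (prod_topology X X)
           (\<lambda>u. (h 1 (u, 0), h 1 (u, 1))) id"
      by (intro exI[of _ "\<lambda>_. h"]) auto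
  qed
  then show ?thesis unfolding TC_G_k_def TC_def by simp
qed

lemma empty_case:
  assumes "topspace X = {}"
  shows "LS_cat X \<noteq> TC X"
proof -
  have "LS_cat X = \<infinity>"
    unfolding LS_cat_def cover_number_def using assms by (auto simp: Inf_enat_def)
  moreover have "TC X \<le> enat 0"
  proof -
    have t: "X = trivial_topology" using assms by simp
    have "enat 0 \<in> {enat n | n. \<exists>U :: nat \<Rightarrow> ('a\<times>'a) set.
      (\<forall>i\<le>n. openin (prod_topology X X) (U i) \<and> (\<exists>h :: ('a \<times> 'a) \<times> real \<Rightarrow> 'a.
        continuous_map (prod_topology (subtopology (prod_topology X X) (U i)) unit_I) X h \<and>
        homotopic_with (\<lambda>_. True) (subtopology (prod_topology X X) (U i)) (prod_topology X X)
           (\<lambda>u. (h (u, 0), h (u, 1))) id)) \<and> (\<Union>i\<le>n. U i) = topspace (prod_topology X X)}"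
      by (rule CollectI, rule exI[of _ 0], simp, rule exI[of _ "\<lambda>_. {}"])
         (simp add: t homotopic_on_emptyI continuous_map_on_empty)
    then show ?thesis unfolding TC_def cover_number_def by (rule Inf_lower)
  qed
  ultimately show ?thesis by auto
qed


lemma homotopic_with_open_partition:
  assumes ope: "\<And>i. i \<in> I \<Longrightarrow> openin X (W i)"
    and disj: "\<And>i j x. i \<in> I \<Longrightarrow> j \<in> I \<Longrightarrow> x \<in> W i \<Longrightarrow> x \<in> W j \<Longrightarrow> i = j"
    and cov: "topspace X \<subseteq> (\<Union>i\<in>I. W i)"
    and hom: "\<And>i. i \<in> I \<Longrightarrow> homotopic_with (\<lambda>_. True) (subtopology X (W i)) Y f g"
  shows "homotopic_with (\<lambda>_. True) X Y f g"
proof -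
  have "\<forall>i\<in>I. \<exists>H. continuous_map (prod_topology (top_of_set {0..1::real}) (subtopology X (W i))) Y H \<and>
      (\<forall>x\<in>topspace (subtopology X (W i)). H(0,x) = f x) \<and> (\<forall>x\<in>topspace (subtopology X (W i)). H(1,x) = g x)"
    using hom by (auto simp: homotopic_with)
  then obtain H where H: "\<And>i. i \<in> I \<Longrightarrow> continuous_map (prod_topology (top_of_set {0..1::real}) (subtopology X (W i))) Y (H i) \<and>
      (\<forall>x\<in>topspace (subtopology X (W i)). H i (0,x) = f x) \<and> (\<forall>x\<in>topspace (subtopology X (W i)). H i (1,x) = g x)"
    by metis
  define sel where "sel x = (SOME i. i \<in> I \<and> x \<in> W i)" for x
  have sel: "sel x \<in> I \<and> x \<in> W (sel x)" if "x \<in> topspace X" for x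
    unfolding sel_def using cov that by (metis (mono_tags, lifting) UN_iff someI_ex subsetD)
  define K where "K p = H (sel (snd p)) p" for p
  have contK: "continuous_map (prod_topology (top_of_set {0..1::real}) X) Y K"
  proof (rule pasting_lemma[where I = I and T = "\<lambda>i. topspace (top_of_set {0..1::real}) \<times> W i" and f = H])
    fix i assume i: "i \<in> I"
    show "openin (prod_topology (top_of_set {0..1::real}) X) (topspace (top_of_set {0..1::real}) \<times> W i)"
      using ope[OF i] by (simp add: openin_prod_Times_iff)
    show "continuous_map (subtopology (prod_topology (top_of_set {0..1::real}) X) (topspace (top_of_set {0..1::real}) \<times> W i)) Y (H i)"
      using H[OF i] by (simp add: subtopology_Times subtopology_subtopology)
  next
    fix i j x assume "i \<in> I" "j \<in> I" "x \<in> topspace (prod_topology (top_of_set {0..1::real}) X) \<inter> (topspace (top_of_set {0..1::real}) \<times> W i) \<inter> (topspace (top_of_set {0..1::real}) \<times> W j)"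
    then have "i = j" using disj by auto
    then show "H i x = H j x" by simp
  next
    fix p assume "p \<in> topspace (prod_topology (top_of_set {0..1::real}) X)"
    then show "\<exists>j. j \<in> I \<and> p \<in> topspace (top_of_set {0..1::real}) \<times> W j \<and> K p = H j p"
      using sel[of "snd p"] unfolding K_def by (cases p) auto
  qed
  have "\<exists>h. continuous_map (prod_topology (top_of_set {0..1::real}) X) Y h \<and>
              (\<forall>x \<in> topspace X. h(0,x) = f x) \<and>
              (\<forall>x \<in> topspace X. h(1,x) = g x) \<and>
              (\<forall>t \<in> {0..1::real}. True)"
  proof (intro exI[of _ K] conjI ballI TrueI)
    show "continuous_map (prod_topology (top_of_set {0..1::real}) X) Y K" by (rule contK)
  next
    fix x assume x: "x \<in> topspace X"
    show "K (0, x) = f x" "K (1, x) = g x"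
      using H[OF conjunct1[OF sel[OF x]]] sel[OF x] x by (auto simp: K_def)
  qed
  then show ?thesis by (subst homotopic_with) auto
qed

lemma free_unique:
  fixes G :: "('g, 'm) monoid_scheme" (structure)
  assumes act: "group_action G E \<phi>"
    and free: "\<forall>g\<in>carrier G. \<forall>x\<in>E. \<phi> g x = x \<longrightarrow> g = \<one>\<^bsub>G\<^esub>"
    and g: "g \<in> carrier G" and g': "g' \<in> carrier G" and y: "y \<in> E"
    and eq: "\<phi> g y = \<phi> g' y"
  shows "g = g'"
proof -
  interpret group_action G E \<phi> by (rule act)
  have grp: "group G" using group_hom group_hom.axioms(1) by blast
  have one: "\<phi> \<one> z = z" if "z \<in> E" for z
    using id_eq_one that by (metis restrict_apply')
  have "\<phi> (inv g' \<otimes> g) y = \<phi> (inv g') (\<phi> g y)" using composition_rule[OF y group.inv_closed[OF grp g'] g] .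
  also have "\<dots> = \<phi> (inv g') (\<phi> g' y)" using eq by simp
  also have "\<dots> = \<phi> (inv g' \<otimes> g') y" using composition_rule[OF y group.inv_closed[OF grp g'] g'] by simp
  also have "\<dots> = y" using one y g' group.l_inv[OF grp g'] by simp
  finally have "inv g' \<otimes> g = \<one>" using free g group.inv_closed[OF grp g'] monoid.m_closed[OF group.is_monoid[OF grp]] y by blast
  then show ?thesis using g g' by (metis grp group.inv_equality group.inv_inv group.inv_closed)
qed

lemma action_one:
  fixes G :: "('g, 'm) monoid_scheme" (structure)
  assumes act: "group_action G E \<phi>" and "z \<in> E"
  shows "\<phi> \<one>\<^bsub>G\<^esub> z = z"
proof -
  interpret group_action G E \<phi> by (rule act)
  show ?thesis using id_eq_one assms(2) by (metis restrict_apply')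
qed

lemma action_inv_cancel:
  fixes G :: "('g, 'm) monoid_scheme" (structure)
  assumes act: "group_action G E \<phi>" and "z \<in> E" and "g \<in> carrier G"
  shows "\<phi> (inv\<^bsub>G\<^esub> g) (\<phi> g z) = z"
proof -
  interpret group_action G E \<phi> by (rule act)
  have grp: "group G" using group_hom group_hom.axioms(1) by blast
  have "\<phi> (inv g) (\<phi> g z) = \<phi> (inv g \<otimes> g) z" using composition_rule[OF assms(2) group.inv_closed[OF grp assms(3)] assms(3)] by simp
  also have "\<dots> = z" using action_one[OF act] assms group.l_inv[OF grp assms(3)] by simp
  finally show ?thesis .
qed


lemma slice_contractible:
  fixes X :: "'a topology" and G :: "('g, 'm) monoid_scheme" (structure)
    and h :: "nat \<Rightarrow> ('a \<times> 'a) \<times> real \<Rightarrow> 'a"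
  assumes act: "group_action G (topspace X) \<phi>"
    and cont_act: "\<forall>g\<in>carrier G. continuous_map X X (\<phi> g)"
    and free: "\<forall>g\<in>carrier G. \<forall>x\<in>topspace X. \<phi> g x = x \<longrightarrow> g = \<one>\<^bsub>G\<^esub>"
    and fin: "finite (carrier G)"
    and haus: "Hausdorff_space X"
    and pc: "path_connected_space X"
    and x0: "x0 \<in> topspace X"
    and k: "1 \<le> k"
    and hc: "\<forall>i\<in>{1..k}. continuous_map (prod_topology (subtopology (prod_topology X X) U) unit_I) X (h i)"
    and ho: "\<forall>u\<in>U. \<forall>i\<in>{1..<k}. orbit G \<phi> (h i (u, 1)) = orbit G \<phi> (h (Suc i) (u, 0))"
    and hh: "homotopic_with (\<lambda>_. True) (subtopology (prod_topology X X) U) (prod_topology X X)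
           (\<lambda>u. (h 1 (u, 0), h k (u, 1))) id"
  shows "homotopic_with (\<lambda>_. True) (subtopology X {x\<in>topspace X. (x,x0)\<in>U}) X id (\<lambda>_. x0)"
proof -
  interpret GA: group_action G "topspace X" \<phi> by (rule act)
  have grp: "group G" using GA.group_hom group_hom.axioms(1) by blast
  define V where "V = {x\<in>topspace X. (x,x0)\<in>U}"
  define A where "A i x = h i ((x,x0),0)" for i x
  define B where "B i x = h i ((x,x0),1)" for i x
  have VX: "V \<subseteq> topspace X" by (auto simp: V_def)
  have j: "continuous_map (subtopology X S) (subtopology (prod_topology X X) U) (\<lambda>x. (x,x0))" if "S \<subseteq> V" for S
    unfolding continuous_map_in_subtopology
  proof
    show "continuous_map (subtopology X S) (prod_topology X X) (\<lambda>x. (x, x0))"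
    proof (rule continuous_map_pairedI)
      show "continuous_map (subtopology X S) X (\<lambda>x. x)"
        by (simp add: continuous_map_from_subtopology)
      show "continuous_map (subtopology X S) X (\<lambda>x. x0)"
        using x0 by simp
    qed
    show "(\<lambda>x. (x, x0)) \<in> topspace (subtopology X S) \<rightarrow> U" using that by (auto simp: V_def)
  qed
  have hAB: "homotopic_with (\<lambda>_. True) (subtopology X S) X (A i) (B i)" if S: "S \<subseteq> V" and i: "i\<in>{1..k}" for S i
  proof -
    have "continuous_map (prod_topology (top_of_set {0..1::real}) (subtopology X S))
        (prod_topology (subtopology (prod_topology X X) U) unit_I) (\<lambda>p. ((snd p, x0), fst p))"
    proof (rule continuous_map_pairedI)
      show "continuous_map (prod_topology (top_of_set {0..1::real}) (subtopology X S)) (subtopology (prod_topology X X) U) (\<lambda>p. (snd p, x0))"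
        using continuous_map_compose[OF continuous_map_snd j[OF S]] by (simp add: o_def)
      show "continuous_map (prod_topology (top_of_set {0..1::real}) (subtopology X S)) unit_I fst"
        by (rule continuous_map_fst)
    qed
    then have "continuous_map (prod_topology (top_of_set {0..1::real}) (subtopology X S)) X (h i \<circ> (\<lambda>p. ((snd p, x0), fst p)))"
      using continuous_map_compose hc i by blast
    then show ?thesis unfolding homotopic_with_def
      by (intro exI[of _ "h i \<circ> (\<lambda>p. ((snd p, x0), fst p))"]) (auto simp: A_def B_def)
  qed
  have hh2: "homotopic_with (\<lambda>_. True) (subtopology X S) (prod_topology X X)
      ((\<lambda>u. (h 1 (u, 0), h k (u, 1))) \<circ> (\<lambda>x. (x,x0))) (id \<circ> (\<lambda>x. (x,x0)))" if S: "S \<subseteq> V" for S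
    by (rule homotopic_with_compose_continuous_map_right[OF hh j[OF S]]) simp
  have hA1: "homotopic_with (\<lambda>_. True) (subtopology X S) X id (A 1)" if S: "S \<subseteq> V" for S
  proof -
    have "homotopic_with (\<lambda>_. True) (subtopology X S) X
      (fst \<circ> ((\<lambda>u. (h 1 (u, 0), h k (u, 1))) \<circ> (\<lambda>x. (x,x0)))) (fst \<circ> (id \<circ> (\<lambda>x. (x,x0))))"
      by (rule homotopic_with_compose_continuous_map_left[OF hh2[OF S] continuous_map_fst]) simp
    then have "homotopic_with (\<lambda>_. True) (subtopology X S) X (A 1) id"
      by (rule homotopic_with_eq) (auto simp: A_def)
    then show ?thesis by (rule homotopic_with_symD)
  qed
  have hBk: "homotopic_with (\<lambda>_. True) (subtopology X S) X (B k) (\<lambda>_. x0)" if S: "S \<subseteq> V" for S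
  proof -
    have "homotopic_with (\<lambda>_. True) (subtopology X S) X
      (snd \<circ> ((\<lambda>u. (h 1 (u, 0), h k (u, 1))) \<circ> (\<lambda>x. (x,x0)))) (snd \<circ> (id \<circ> (\<lambda>x. (x,x0))))"
      by (rule homotopic_with_compose_continuous_map_left[OF hh2[OF S] continuous_map_snd]) simp
    then show "homotopic_with (\<lambda>_. True) (subtopology X S) X (B k) (\<lambda>_. x0)"
      by (rule homotopic_with_eq) (auto simp: B_def)
  qed
  have contA: "continuous_map (subtopology X V) X (A i)" and contB: "continuous_map (subtopology X V) X (B i)"
    if "i \<in> {1..k}" for i
    using homotopic_with_imp_continuous_maps[OF hAB[OF order_refl that]] by auto
  have topV: "topspace (subtopology X V) = V" using VX by (rule topspace_subtopology_subset)
  have AX: "A i x \<in> topspace X" and BX: "B i x \<in> topspace X" if "i \<in> {1..k}" "x \<in> V" for i x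
    using continuous_map_image_subset_topspace[OF contA[OF that(1)]]
      continuous_map_image_subset_topspace[OF contB[OF that(1)]] that(2) topV by blast+
  have orb: "\<exists>g\<in>carrier G. A (Suc i) x = \<phi> g (B i x)" if i: "i \<in> {1..<k}" and x: "x \<in> V" for i x
  proof -
    have u: "(x,x0) \<in> U" using x by (auto simp: V_def)
    have "A (Suc i) x \<in> topspace X" using AX[of "Suc i" x] i x by auto
    then have "\<phi> \<one> (A (Suc i) x) = A (Suc i) x" by (rule action_one[OF act])
    then have "A (Suc i) x \<in> orbit G \<phi> (A (Suc i) x)"
      unfolding orbit_def using monoid.one_closed[OF group.is_monoid[OF grp]]
      by (intro CollectI exI[of _ "\<one>"]) simp
    also have "\<dots> = orbit G \<phi> (B i x)" using ho u i by (simp add: A_def B_def)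
    finally show ?thesis unfolding orbit_def by blast
  qed
  define \<Gamma> where "\<Gamma> = PiE {1..<k} (\<lambda>_. carrier G)"
  define W where "W \<gamma> = {x\<in>V. \<forall>i\<in>{1..<k}. A (Suc i) x = \<phi> (\<gamma> i) (B i x)}" for \<gamma>
  have WV: "W \<gamma> \<subseteq> V" for \<gamma> by (auto simp: W_def)
  have openW: "openin (subtopology X V) (W \<gamma>)" if \<gamma>: "\<gamma> \<in> \<Gamma>" for \<gamma>
  proof -
    define C where "C i g = {x \<in> topspace (subtopology X V). A (Suc i) x = (\<phi> g \<circ> B i) x}" for i g
    have clC: "closedin (subtopology X V) (C i g)" if "i \<in> {1..<k}" "g \<in> carrier G" for i g
      unfolding C_def
    proof (rule closedin_continuous_maps_eq[OF haus])
      show "continuous_map (subtopology X V) X (A (Suc i))" using contA that by auto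
      show "continuous_map (subtopology X V) X (\<phi> g \<circ> B i)"
        using contB that cont_act by (intro continuous_map_compose) auto
    qed
    have eqW: "W \<gamma> = topspace (subtopology X V) - \<Union>((\<lambda>(i,g). C i g) ` (SIGMA i:{1..<k}. carrier G - {\<gamma> i}))"
    proof (rule subset_antisym; rule subsetI)
      fix x assume x: "x \<in> W \<gamma>"
      then have xV: "x \<in> V" by (auto simp: W_def)
      have "x \<notin> C i g" if "i \<in> {1..<k}" "g \<in> carrier G - {\<gamma> i}" for i g
      proof
        assume "x \<in> C i g"
        then have "\<phi> g (B i x) = \<phi> (\<gamma> i) (B i x)" using x that by (auto simp: C_def W_def)
        moreover have "\<gamma> i \<in> carrier G" using \<gamma> that by (auto simp: \<Gamma>_def)
        ultimately have "g = \<gamma> i" using free_unique[OF act free] that BX[of i x] xV by auto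
        then show False using that by auto
      qed
      then show "x \<in> topspace (subtopology X V) - \<Union>((\<lambda>(i,g). C i g) ` (SIGMA i:{1..<k}. carrier G - {\<gamma> i}))"
        using xV topV by auto
    next
      fix x assume x: "x \<in> topspace (subtopology X V) - \<Union>((\<lambda>(i,g). C i g) ` (SIGMA i:{1..<k}. carrier G - {\<gamma> i}))"
      then have xV: "x \<in> V" using topV by auto
      have "A (Suc i) x = \<phi> (\<gamma> i) (B i x)" if i: "i \<in> {1..<k}" for i
      proof (rule ccontr)
        assume ne: "A (Suc i) x \<noteq> \<phi> (\<gamma> i) (B i x)"
        obtain g where g: "g \<in> carrier G" "A (Suc i) x = \<phi> g (B i x)" using orb[OF i xV] by auto
        then have "g \<noteq> \<gamma> i" using ne by auto
        then have "x \<in> C i g" using g xV topV by (auto simp: C_def)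
        then show False using x i g \<open>g \<noteq> \<gamma> i\<close> by blast
      qed
      then show "x \<in> W \<gamma>" using xV by (auto simp: W_def)
    qed
    have "closedin (subtopology X V) (\<Union>((\<lambda>(i,g). C i g) ` (SIGMA i:{1..<k}. carrier G - {\<gamma> i})))"
      by (rule closedin_Union) (use fin clC in auto)
    then show ?thesis unfolding eqW by (intro openin_diff openin_topspace)
  qed
  have piece: "homotopic_with (\<lambda>_. True) (subtopology X (W \<gamma>)) X id (\<lambda>_. x0)" if \<gamma>: "\<gamma> \<in> \<Gamma>" for \<gamma>
  proof -
    let ?T = "subtopology X (W \<gamma>)"
    have topT: "topspace ?T = W \<gamma>" using WV VX by (intro topspace_subtopology_subset) auto
    have claim: "\<exists>g\<in>carrier G. homotopic_with (\<lambda>_. True) ?T X (A (k - m)) (\<lambda>x. \<phi> g x0)" if "m < k" for m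
      using that
    proof (induction m)
      case 0
      have h1: "homotopic_with (\<lambda>_. True) ?T X (A k) (B k)" using hAB[OF WV] k by auto
      have "homotopic_with (\<lambda>_. True) ?T X (B k) (\<lambda>_. x0)" using hBk[OF WV] .
      then have "homotopic_with (\<lambda>_. True) ?T X (B k) (\<lambda>_. \<phi> \<one> x0)"
        by (rule homotopic_with_eq) (auto simp: action_one[OF act x0])
      with h1 have "homotopic_with (\<lambda>_. True) ?T X (A k) (\<lambda>_. \<phi> \<one> x0)"
        by (rule homotopic_with_trans)
      then show ?case using monoid.one_closed[OF group.is_monoid[OF grp]] by auto
    next
      case (Suc m)
      define i where "i = k - Suc m"
      have i: "1 \<le> i" "i < k" "Suc i = k - m" using Suc.prems by (auto simp: i_def)
      obtain g where g: "g \<in> carrier G" "homotopic_with (\<lambda>_. True) ?T X (A (Suc i)) (\<lambda>x. \<phi> g x0)"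
        using Suc.IH Suc.prems i(3) by auto
      have gi: "\<gamma> i \<in> carrier G" using \<gamma> i by (auto simp: \<Gamma>_def)
      have igi: "inv (\<gamma> i) \<in> carrier G" using group.inv_closed[OF grp gi] .
      have "homotopic_with (\<lambda>_. True) ?T X (\<phi> (inv (\<gamma> i)) \<circ> A (Suc i)) (\<phi> (inv (\<gamma> i)) \<circ> (\<lambda>x. \<phi> g x0))"
        by (rule homotopic_with_compose_continuous_map_left[OF g(2)]) (use cont_act igi in auto)
      then have h2: "homotopic_with (\<lambda>_. True) ?T X (B i) (\<lambda>x. \<phi> (inv (\<gamma> i) \<otimes> g) x0)"
      proof (rule homotopic_with_eq)
        fix x assume "x \<in> topspace ?T"
        then have x: "x \<in> W \<gamma>" using topT by simp
        then have "A (Suc i) x = \<phi> (\<gamma> i) (B i x)" using i(1,2) by (auto simp: W_def)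
        moreover have "B i x \<in> topspace X" using BX[of i x] x WV i by auto
        ultimately show "B i x = (\<phi> (inv (\<gamma> i)) \<circ> A (Suc i)) x"
          using action_inv_cancel[OF act _ gi] by simp
        show "\<phi> (inv (\<gamma> i) \<otimes> g) x0 = (\<phi> (inv (\<gamma> i)) \<circ> (\<lambda>x. \<phi> g x0)) x"
          using GA.composition_rule[OF x0 igi g(1)] by simp
      qed simp
      have "homotopic_with (\<lambda>_. True) ?T X (A i) (B i)" using hAB[OF WV] i by auto
      then have "homotopic_with (\<lambda>_. True) ?T X (A i) (\<lambda>x. \<phi> (inv (\<gamma> i) \<otimes> g) x0)"
        using h2 by (rule homotopic_with_trans)
      moreover have "inv (\<gamma> i) \<otimes> g \<in> carrier G"
        using monoid.m_closed[OF group.is_monoid[OF grp] igi g(1)] .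
      ultimately show ?case unfolding i_def by blast
    qed
    obtain g where g: "g \<in> carrier G" "homotopic_with (\<lambda>_. True) ?T X (A 1) (\<lambda>x. \<phi> g x0)"
      using claim[of "k - 1"] k by auto
    have gx0: "\<phi> g x0 \<in> topspace X" using GA.element_image[OF g(1) x0] by simp
    have "path_component_of X (\<phi> g x0) x0"
      using pc gx0 x0 by (simp add: path_connected_space_iff_path_component)
    then have "homotopic_with (\<lambda>_. True) ?T X (\<lambda>x. \<phi> g x0) (\<lambda>_. x0)"
      by (simp add: homotopic_constant_maps)
    then have "homotopic_with (\<lambda>_. True) ?T X (A 1) (\<lambda>_. x0)"
      using g(2) homotopic_with_trans by blast
    then show ?thesis using hA1[OF WV] homotopic_with_trans by blast
  qed
  have "homotopic_with (\<lambda>_. True) (subtopology X V) X id (\<lambda>_. x0)"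
  proof (rule homotopic_with_open_partition[where I = \<Gamma> and W = W])
    fix \<gamma> assume "\<gamma> \<in> \<Gamma>"
    then show "openin (subtopology X V) (W \<gamma>)" by (rule openW)
    have "subtopology (subtopology X V) (W \<gamma>) = subtopology X (W \<gamma>)"
      using WV by (simp add: subtopology_subtopology Int_absorb1)
    then show "homotopic_with (\<lambda>_. True) (subtopology (subtopology X V) (W \<gamma>)) X id (\<lambda>_. x0)"
      using piece[OF \<open>\<gamma> \<in> \<Gamma>\<close>] by simp
  next
    fix \<gamma> \<delta> x assume g: "\<gamma> \<in> \<Gamma>" "\<delta> \<in> \<Gamma>" "x \<in> W \<gamma>" "x \<in> W \<delta>"
    have "\<gamma> i = \<delta> i" for i
    proof (cases "i \<in> {1..<k}")
      case True
      have xV: "x \<in> V" using g WV by auto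
      have "\<phi> (\<gamma> i) (B i x) = \<phi> (\<delta> i) (B i x)" using g True by (auto simp: W_def)
      moreover have "\<gamma> i \<in> carrier G" "\<delta> i \<in> carrier G" using g True by (auto simp: \<Gamma>_def)
      moreover have "B i x \<in> topspace X" using BX[of i x] xV True by auto
      ultimately show ?thesis using free_unique[OF act free] by blast
    next
      case False
      then show ?thesis using g by (auto simp: \<Gamma>_def PiE_def extensional_def)
    qed
    then show "\<gamma> = \<delta>" by auto
  next
    show "topspace (subtopology X V) \<subseteq> (\<Union>\<gamma>\<in>\<Gamma>. W \<gamma>)"
    proof
      fix x assume "x \<in> topspace (subtopology X V)"
      then have xV: "x \<in> V" using topV by simp
      define \<gamma> where "\<gamma> = restrict (\<lambda>i. SOME g. g \<in> carrier G \<and> A (Suc i) x = \<phi> g (B i x)) {1..<k}"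
      have "\<gamma> i \<in> carrier G \<and> A (Suc i) x = \<phi> (\<gamma> i) (B i x)" if "i \<in> {1..<k}" for i
        using someI_ex[OF orb[OF that xV, unfolded Bex_def]] that by (simp add: \<gamma>_def)
      then have "\<gamma> \<in> \<Gamma>" "x \<in> W \<gamma>" using xV by (auto simp: \<Gamma>_def W_def \<gamma>_def)
      then show "x \<in> (\<Union>\<gamma>\<in>\<Gamma>. W \<gamma>)" by blast
    qed
  qed
  then show ?thesis unfolding V_def .
qed


theorem mainTheorem15:
  fixes X :: "'a topology" and G :: "('g, 'm) monoid_scheme" and \<phi> :: "'g \<Rightarrow> 'a \<Rightarrow> 'a"
  assumes "group G" and "finite (carrier G)"
    and "path_connected_space X"
    and "group_action G (topspace X) \<phi>"
    and "\<forall>g\<in>carrier G. continuous_map X X (\<phi> g)"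
    and "\<forall>g\<in>carrier G. \<forall>x\<in>topspace X. \<phi> g x = x \<longrightarrow> g = \<one>\<^bsub>G\<^esub>"
    and "\<exists>E cdim chi. cw_structure X E cdim chi \<and> (\<forall>g\<in>carrier G. \<forall>e\<in>E. \<phi> g ` e \<in> E)"
    and "LS_cat X = TC X"
  shows "TC_G_inf X G \<phi> = LS_cat X"
proof -
  have haus: "Hausdorff_space X" using assms(7) by (auto simp: cw_structure_def)
  have "topspace X \<noteq> {}" using empty_case assms(8) by blast
  then obtain x0 where x0: "x0 \<in> topspace X" by blast
  have up: "TC_G_inf X G \<phi> \<le> LS_cat X"
  proof -
    have "TC_G_inf X G \<phi> \<le> TC_G_k X G \<phi> 1" unfolding TC_G_inf_def by (rule INF_lower) simp
    also have "\<dots> = TC X" by (rule TC_G_k_one)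
    finally show ?thesis using assms(8) by simp
  qed
  have low: "LS_cat X \<le> TC_G_k X G \<phi> k" if k: "k \<in> {1..}" for k
    unfolding LS_cat_def TC_G_k_def
  proof (rule cover_number_le[where f = "\<lambda>U. {x\<in>topspace X. (x,x0)\<in>U}"])
    fix U assume U: "openin (prod_topology X X) U"
      and P: "\<exists>h :: nat \<Rightarrow> ('a \<times> 'a) \<times> real \<Rightarrow> 'a.
        (\<forall>i\<in>{1..k}. continuous_map (prod_topology (subtopology (prod_topology X X) U) unit_I) X (h i)) \<and>
        (\<forall>u\<in>U. \<forall>i\<in>{1..<k}. orbit G \<phi> (h i (u, 1)) = orbit G \<phi> (h (Suc i) (u, 0))) \<and>
        homotopic_with (\<lambda>_. True) (subtopology (prod_topology X X) U) (prod_topology X X)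
           (\<lambda>u. (h 1 (u, 0), h k (u, 1))) id"
    have cj: "continuous_map X (prod_topology X X) (\<lambda>x. (x, x0))"
      using x0 by (intro continuous_map_pairedI) (simp_all add: continuous_map_id[unfolded id_def])
    show "openin X {x\<in>topspace X. (x,x0)\<in>U} \<and>
      (\<exists>a\<in>topspace X. homotopic_with (\<lambda>_. True) (subtopology X {x\<in>topspace X. (x,x0)\<in>U}) X id (\<lambda>_. a))"
    proof
      show "openin X {x\<in>topspace X. (x,x0)\<in>U}"
        using openin_continuous_map_preimage[OF cj U] .
      obtain h :: "nat \<Rightarrow> ('a \<times> 'a) \<times> real \<Rightarrow> 'a" where
        hc: "\<forall>i\<in>{1..k}. continuous_map (prod_topology (subtopology (prod_topology X X) U) unit_I) X (h i)"
        and ho: "\<forall>u\<in>U. \<forall>i\<in>{1..<k}. orbit G \<phi> (h i (u, 1)) = orbit G \<phi> (h (Suc i) (u, 0))"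
        and hh: "homotopic_with (\<lambda>_. True) (subtopology (prod_topology X X) U) (prod_topology X X)
           (\<lambda>u. (h 1 (u, 0), h k (u, 1))) id"
        using P by blast
      show "\<exists>a\<in>topspace X. homotopic_with (\<lambda>_. True) (subtopology X {x\<in>topspace X. (x,x0)\<in>U}) X id (\<lambda>_. a)"
        using slice_contractible[OF assms(4) assms(5) assms(6) assms(2) haus assms(3) x0 _ hc ho hh] k x0
        by auto
    qed
  next
    fix U :: "nat \<Rightarrow> ('a \<times> 'a) set" and n :: nat
    assume "(\<Union>i\<le>n. U i) = topspace (prod_topology X X)"
    then show "(\<Union>i\<le>n. {x\<in>topspace X. (x,x0)\<in>U i}) = topspace X"
      using x0 by auto
  qed
  have "LS_cat X \<le> TC_G_inf X G \<phi>" unfolding TC_G_inf_def by (rule INF_greatest) (rule low)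
  with up show ?thesis by (rule antisym)
qed

end
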